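(* Let $H\in C^2(\mathbb{R}^2)$ satisfy (H1) and (H2). Then: (i) $\tilde\tau_H\in C^0(\mathbb{R}^2)$, $\tilde\tau_H(0)=\frac12$, and $\tilde\tau_H(p)\ge\frac12\Big[\frac{\lambda_H(H(p))}{\Lambda_H(H(p))}\Big]^2$ for all $p\ne0$; (ii) if $H^\gamma$ is convex on $H^{-1}([0,R])$ for some $\gamma\in[\frac12,1)$ and $R>0$, then $\tilde\tau_H\ge1-\gamma$ on $H^{-1}([0,R])$.
   Context: Local strong convexity/concavity: for every bounded convex $U\subset\mathbb{R}^2$ there is $\lambda>0$ (resp. $\Lambda>0$) with $H(p)-\frac\lambda2|p|^2$ (resp. $\frac\Lambda2|p|^2-H(p)$) convex on $U$. (H1): $H$ locally strongly convex and locally strongly concave. (H2): $H(0)=\min H=0$. $\lambda_H(R):=\sup_{\epsilon>0}\sup\{\lambda>0: H-\frac\lambda2|p|^2\text{ convex on }H^{-1}([0,R+\epsilon))\}$, $\Lambda_H(R):=\inf_{\epsilon>0}\inf\{\Lambda>0:\frac\Lambda2|p|^2-H\text{ convex on }H^{-1}([0,R+\epsilon))\}$. $\tilde\tau_H(0)=\frac12$ and $\tilde\tau_H(p)=H(p)/\langle[D^2_{pp}H(p)]^{-1}D_pH(p),D_pH(p)\rangle$ for $p\ne0$. *)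

theory Defs
  imports "HOL-Analysis.Analysis"
begin

definition C2_with :: "(real^2 \<Rightarrow> real) \<Rightarrow> (real^2 \<Rightarrow> real^2) \<Rightarrow> (real^2 \<Rightarrow> real^2^2) \<Rightarrow> bool" where
  "C2_with H DH D2H \<longleftrightarrow>
     (\<forall>p. (H has_derivative (\<lambda>v. DH p \<bullet> v)) (at p)) \<and>
     (\<forall>p. (DH has_derivative (\<lambda>v. D2H p *v v)) (at p)) \<and>
     continuous_on UNIV D2H"

definition loc_strongly_convex :: "(real^2 \<Rightarrow> real) \<Rightarrow> bool" where
  "loc_strongly_convex H \<longleftrightarrow>
     (\<forall>U. bounded U \<and> convex U \<longrightarrow> (\<exists>l>0. convex_on U (\<lambda>p. H p - l / 2 * (norm p)^2)))"

definition loc_strongly_concave :: "(real^2 \<Rightarrow> real) \<Rightarrow> bool" where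
  "loc_strongly_concave H \<longleftrightarrow>
     (\<forall>U. bounded U \<and> convex U \<longrightarrow> (\<exists>L>0. convex_on U (\<lambda>p. L / 2 * (norm p)^2 - H p)))"

definition lambdaH :: "(real^2 \<Rightarrow> real) \<Rightarrow> real \<Rightarrow> real" where
  "lambdaH H R = (SUP e\<in>{0<..}. Sup {l. l > 0 \<and>
       convex_on (H -` {0..<R + e}) (\<lambda>p. H p - l / 2 * (norm p)^2)})"

definition LambdaH :: "(real^2 \<Rightarrow> real) \<Rightarrow> real \<Rightarrow> real" where
  "LambdaH H R = (INF e\<in>{0<..}. Inf {L. L > 0 \<and>
       convex_on (H -` {0..<R + e}) (\<lambda>p. L / 2 * (norm p)^2 - H p)})"

definition tau_tilde :: "(real^2 \<Rightarrow> real) \<Rightarrow> (real^2 \<Rightarrow> real^2) \<Rightarrow> (real^2 \<Rightarrow> real^2^2) \<Rightarrow> real^2 \<Rightarrow> real" where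
  "tau_tilde H DH D2H p =
     (if p = 0 then 1/2 else H p / ((matrix_inv (D2H p) *v DH p) \<bullet> DH p))"

end

theory Submission imports Defs begin

lemma conv_tangent:
  fixes \<phi> :: "'a::real_normed_vector \<Rightarrow> real"
  assumes cv: "convex_on U \<phi>" and pU: "p \<in> U" and qU: "q \<in> U"
    and d: "(\<phi> has_derivative \<phi>') (at p)"
  shows "\<phi> p + \<phi>' (q - p) \<le> \<phi> q"
proof -
  let ?v = "q - p"
  have bl: "bounded_linear \<phi>'" using d by (rule has_derivative_bounded_linear)
  have d1: "((\<lambda>t. p + t *\<^sub>R ?v) has_derivative (\<lambda>t. t *\<^sub>R ?v)) (at 0)"
    by (auto intro!: derivative_eq_intros)
  have d2: "((\<lambda>t. \<phi> (p + t *\<^sub>R ?v)) has_derivative (\<lambda>t. \<phi>' (t *\<^sub>R ?v))) (at 0)"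
    using has_derivative_compose[OF d1, of \<phi> \<phi>'] d by simp
  have e: "(\<lambda>t. \<phi>' (t *\<^sub>R ?v)) = (*) (\<phi>' ?v)"
    using bl by (auto simp: linear_simps)
  have "((\<lambda>t. \<phi> (p + t *\<^sub>R ?v)) has_field_derivative \<phi>' ?v) (at 0)"
    unfolding has_field_derivative_def using d2 unfolding e .
  then have "((\<lambda>t. (\<phi> (p + t *\<^sub>R ?v) - \<phi> (p + 0 *\<^sub>R ?v)) / (t - 0)) \<longlongrightarrow> \<phi>' ?v) (at 0)"
    by (simp only: has_field_derivative_iff)
  then have lim: "((\<lambda>t. (\<phi> (p + t *\<^sub>R ?v) - \<phi> p) / t) \<longlongrightarrow> \<phi>' ?v) (at_right 0)"
    using filterlim_at_split by force
  have ev0: "eventually (\<lambda>t::real. t \<in> {0<..<1}) (at_right 0)"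
    by (rule eventually_at_right_real) simp
  have ev: "eventually (\<lambda>t. (\<phi> (p + t *\<^sub>R ?v) - \<phi> p) / t \<le> \<phi> q - \<phi> p) (at_right 0)"
    using ev0
  proof (rule eventually_mono)
    fix t :: real assume t: "t \<in> {0<..<1}"
    have "p + t *\<^sub>R ?v = (1 - t) *\<^sub>R p + t *\<^sub>R q" by (simp add: algebra_simps)
    moreover have "\<phi> ((1 - t) *\<^sub>R p + t *\<^sub>R q) \<le> (1 - t) * \<phi> p + t * \<phi> q"
      using convex_onD[OF cv, of t p q] t pU qU by auto
    ultimately have "\<phi> (p + t *\<^sub>R ?v) - \<phi> p \<le> t * (\<phi> q - \<phi> p)" by (simp add: algebra_simps)
    then show "(\<phi> (p + t *\<^sub>R ?v) - \<phi> p) / t \<le> \<phi> q - \<phi> p" using t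
      by (simp add: divide_simps mult.commute)
  qed
  have "\<phi>' ?v \<le> \<phi> q - \<phi> p"
    by (rule tendsto_upperbound[OF lim ev]) simp
  then show ?thesis by simp
qed

lemma conv_second:
  fixes \<phi> :: "'a::real_inner \<Rightarrow> real" and D\<phi> :: "'a \<Rightarrow> 'a"
  assumes cv: "convex_on U \<phi>" and oU: "open U" and xU: "x \<in> U"
    and d\<phi>: "\<And>y. y \<in> U \<Longrightarrow> (\<phi> has_derivative (\<lambda>v. D\<phi> y \<bullet> v)) (at y)"
    and dD: "(D\<phi> has_derivative B) (at x)"
  shows "B v \<bullet> v \<ge> 0"
proof -
  have "((\<lambda>t::real. x + t *\<^sub>R v) \<longlongrightarrow> x + 0 *\<^sub>R v) (at_right 0)"
    by (intro tendsto_intros)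
  then have "((\<lambda>t::real. x + t *\<^sub>R v) \<longlongrightarrow> x) (at_right 0)" by simp
  then have ev1: "eventually (\<lambda>t. x + t *\<^sub>R v \<in> U) (at_right 0)"
    using topological_tendstoD oU xU by blast
  have ev2: "eventually (\<lambda>t::real. t > 0) (at_right 0)"
    by (simp add: eventually_at_right_less)
  have ev: "eventually (\<lambda>t. (D\<phi> (x + t *\<^sub>R v) \<bullet> v - D\<phi> (x + 0 *\<^sub>R v) \<bullet> v) / (t - 0) \<ge> 0) (at_right 0)"
    using ev1 ev2
  proof eventually_elim
    case (elim t)
    let ?y = "x + t *\<^sub>R v"
    have a: "\<phi> x + D\<phi> x \<bullet> (?y - x) \<le> \<phi> ?y"
      using conv_tangent[OF cv xU elim(1) d\<phi>[OF xU]] .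
    have b: "\<phi> ?y + D\<phi> ?y \<bullet> (x - ?y) \<le> \<phi> x"
      using conv_tangent[OF cv elim(1) xU d\<phi>[OF elim(1)]] .
    have "0 \<le> t * (D\<phi> ?y \<bullet> v - D\<phi> x \<bullet> v)"
      using a b by (simp add: inner_diff_right algebra_simps)
    then have "0 \<le> D\<phi> ?y \<bullet> v - D\<phi> x \<bullet> v" using elim(2)
      by (simp add: zero_le_mult_iff)
    then show ?case using elim(2) by simp
  qed
  have bl: "bounded_linear B" using dD by (rule has_derivative_bounded_linear)
  have d1: "((\<lambda>t. x + t *\<^sub>R v) has_derivative (\<lambda>t. t *\<^sub>R v)) (at 0)"
    by (auto intro!: derivative_eq_intros)
  have dD': "(D\<phi> has_derivative B) (at (x + 0 *\<^sub>R v))" using dD by simp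
  have d2: "((\<lambda>t. D\<phi> (x + t *\<^sub>R v)) has_derivative (\<lambda>t. B (t *\<^sub>R v))) (at 0)"
    using has_derivative_compose[OF d1 dD'] by simp
  have d3: "((\<lambda>t. D\<phi> (x + t *\<^sub>R v) \<bullet> v) has_derivative (\<lambda>t. B (t *\<^sub>R v) \<bullet> v)) (at 0)"
    using has_derivative_inner_left[OF d2] .
  have e: "(\<lambda>t. B (t *\<^sub>R v) \<bullet> v) = (*) (B v \<bullet> v)"
    using bl by (auto simp: linear_simps mult.commute)
  have "((\<lambda>t. D\<phi> (x + t *\<^sub>R v) \<bullet> v) has_field_derivative (B v \<bullet> v)) (at 0)"
    unfolding has_field_derivative_def using d3 unfolding e .
  then have "((\<lambda>t. (D\<phi> (x + t *\<^sub>R v) \<bullet> v - D\<phi> (x + 0 *\<^sub>R v) \<bullet> v) / (t - 0)) \<longlongrightarrow> B v \<bullet> v) (at 0)"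
    by (simp only: has_field_derivative_iff)
  then have lim: "((\<lambda>t. (D\<phi> (x + t *\<^sub>R v) \<bullet> v - D\<phi> (x + 0 *\<^sub>R v) \<bullet> v) / (t - 0)) \<longlongrightarrow> B v \<bullet> v) (at_right 0)"
    using filterlim_at_split by blast
  show ?thesis
    by (rule tendsto_lowerbound[OF lim ev]) simp
qed

lemma pd_inv:
  fixes A :: "real^'n^'n"
  assumes pd: "\<And>w. (A *v w) \<bullet> w \<ge> l * (norm w)^2" and l: "l > 0"
  shows "A *v (matrix_inv A *v u) = u" and "matrix_inv A *v (A *v w) = w"
    and "l * norm (matrix_inv A *v u) \<le> norm u"
    and "(matrix_inv A *v u) \<bullet> u \<ge> l * (norm (matrix_inv A *v u))^2"
    and "(matrix_inv A *v u) \<bullet> u \<le> (norm u)^2 / l"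
proof -
  have ker: "\<forall>x. A *v x = 0 \<longrightarrow> x = 0"
  proof (intro allI impI)
    fix x assume "A *v x = 0"
    then have "l * (norm x)^2 \<le> 0" using pd[of x] by simp
    then show "x = 0" using l by (simp add: mult_le_0_iff)
  qed
  have inv: "invertible A"
    using ker matrix_left_invertible_ker invertible_left_inverse by blast
  then have "\<exists>A'. A ** A' = mat 1 \<and> A' ** A = mat 1" unfolding invertible_def .
  then have AA: "A ** matrix_inv A = mat 1 \<and> matrix_inv A ** A = mat 1"
    unfolding matrix_inv_def by (rule someI_ex)
  show 1: "A *v (matrix_inv A *v u) = u"
    using AA by (simp add: matrix_vector_mul_assoc)
  show "matrix_inv A *v (A *v w) = w"
    using AA by (simp add: matrix_vector_mul_assoc)
  let ?y = "matrix_inv A *v u"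
  have q: "l * (norm ?y)^2 \<le> ?y \<bullet> u"
    using pd[of ?y] 1 by (simp add: inner_commute)
  then show "?y \<bullet> u \<ge> l * (norm ?y)^2" by simp
  have cs: "?y \<bullet> u \<le> norm ?y * norm u" by (rule norm_cauchy_schwarz)
  have ly: "l * norm ?y \<le> norm u"
  proof (cases "?y = 0")
    case True then show ?thesis by simp
  next
    case False
    then have "norm ?y > 0" by simp
    moreover have "norm ?y * (l * norm ?y) \<le> norm ?y * norm u"
      using q cs by (simp add: power2_eq_square algebra_simps)
    ultimately show ?thesis by simp
  qed
  then show "l * norm ?y \<le> norm u" .
  have "?y \<bullet> u \<le> (norm u / l) * norm u"
    using cs ly l by (smt (verit, best) divide_right_mono mult_right_mono nonzero_mult_div_cancel_left norm_ge_zero)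
  then show "?y \<bullet> u \<le> (norm u)^2 / l" by (simp add: power2_eq_square)
qed

lemma norm_convex_comb_sq:
  fixes x y :: "'a::real_inner"
  shows "(norm ((1 - t) *\<^sub>R x + t *\<^sub>R y))^2 = (1 - t) * (norm x)^2 + t * (norm y)^2 - t * (1 - t) * (norm (x - y))^2"
  by (simp add: power2_norm_eq_inner inner_add_left inner_add_right inner_diff_left inner_diff_right inner_commute algebra_simps)

lemma sup_inf_bound:
  fixes S T :: "real \<Rightarrow> real set" and k :: real
  assumes k: "k > 0" and Sne: "\<And>e. e > 0 \<Longrightarrow> S e \<noteq> {}" and Tne: "\<And>e. e > 0 \<Longrightarrow> T e \<noteq> {}"
    and Tpos: "\<And>e L. L \<in> T e \<Longrightarrow> L > 0"
    and bnd: "\<And>e e' l L. e > 0 \<Longrightarrow> e' > 0 \<Longrightarrow> l \<in> S e \<Longrightarrow> L \<in> T e' \<Longrightarrow> l \<le> k * L"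
  shows "(SUP e\<in>{0<..}. Sup (S e)) \<le> k * (INF e\<in>{0<..}. Inf (T e))"
proof -
  have ne: "{0<..} \<noteq> ({}::real set)" by auto
  have A: "(SUP e\<in>{0<..}. Sup (S e)) \<le> k * L" if e': "e' > 0" and L: "L \<in> T e'" for e' L
  proof (rule cSUP_least[OF ne])
    fix e :: real assume "e \<in> {0<..}"
    then show "Sup (S e) \<le> k * L"
      using Sne bnd e' L by (intro cSup_least) auto
  qed
  have B: "(SUP e\<in>{0<..}. Sup (S e)) / k \<le> Inf (T e')" if e': "e' > 0" for e'
  proof (rule cInf_greatest)
    show "T e' \<noteq> {}" using Tne e' .
    fix L assume "L \<in> T e'"
    then show "(SUP e\<in>{0<..}. Sup (S e)) / k \<le> L" using A[OF e'] k by (simp add: field_simps)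
  qed
  have "(SUP e\<in>{0<..}. Sup (S e)) / k \<le> (INF e\<in>{0<..}. Inf (T e))"
    by (rule cINF_greatest[OF ne]) (use B in auto)
  then show ?thesis using k by (simp add: field_simps)
qed

lemma inf_nonneg:
  fixes T :: "real \<Rightarrow> real set"
  assumes Tne: "\<And>e. e > 0 \<Longrightarrow> T e \<noteq> {}" and Tpos: "\<And>e L. L \<in> T e \<Longrightarrow> L > 0"
  shows "(INF e\<in>{0<..}. Inf (T e)) \<ge> 0"
proof -
  have ne: "{0<..} \<noteq> ({}::real set)" by auto
  show ?thesis
    by (rule cINF_greatest[OF ne], rule cInf_greatest) (use Tne Tpos in \<open>auto simp: less_imp_le\<close>)
qed

lemma sup_nonneg:
  fixes S T :: "real \<Rightarrow> real set" and k :: real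
  assumes k: "k > 0" and Sne: "\<And>e. e > 0 \<Longrightarrow> S e \<noteq> {}" and Tne: "\<And>e. e > 0 \<Longrightarrow> T e \<noteq> {}"
    and Spos: "\<And>e l. l \<in> S e \<Longrightarrow> l > 0"
    and bnd: "\<And>e e' l L. e > 0 \<Longrightarrow> e' > 0 \<Longrightarrow> l \<in> S e \<Longrightarrow> L \<in> T e' \<Longrightarrow> l \<le> k * L"
  shows "(SUP e\<in>{0<..}. Sup (S e)) \<ge> 0"
proof -
  obtain L where L: "L \<in> T 1" using Tne[of 1] by auto
  obtain l where l: "l \<in> S 1" using Sne[of 1] by auto
  have bS: "bdd_above (S e)" if "e > 0" for e
    using bnd[OF that _ _ L] unfolding bdd_above_def by auto
  have "0 < l" using Spos l .
  also have "l \<le> Sup (S 1)" by (rule cSup_upper[OF l bS]) simp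
  also have "Sup (S 1) \<le> (SUP e\<in>{0<..}. Sup (S e))"
  proof (rule cSUP_upper)
    show "1 \<in> {0::real<..}" by simp
    show "bdd_above ((\<lambda>e. Sup (S e)) ` {0<..})"
      unfolding bdd_above_def
      by (rule exI[of _ "k * L"]) (auto intro!: cSup_least Sne bnd[OF _ _ _ L])
  qed
  finally show ?thesis by simp
qed

lemma tendsto_mv:
  fixes f :: "'b \<Rightarrow> real^'n^'m"
  assumes "(f \<longlongrightarrow> A) F"
  shows "((\<lambda>x. f x *v v) \<longlongrightarrow> A *v v) F"
  unfolding matrix_vector_mult_def by (intro tendsto_intros assms)

lemma norm_mv: "norm ((A::real^2^2) *v x) \<le> 4 * norm A * norm x"
proof -
  have "onorm ((*v) A) \<le> real CARD(2) * real CARD(2) * norm A"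
  proof (rule onorm_le_matrix_component)
    fix i j
    have "\<bar>A $ i $ j\<bar> \<le> norm (A $ i)" by (rule component_le_norm_cart)
    also have "\<dots> \<le> norm A" by (rule Finite_Cartesian_Product.norm_nth_le)
    finally show "\<bar>A $ i $ j\<bar> \<le> norm A" .
  qed
  then have o: "onorm ((*v) A) \<le> 4 * norm A" by simp
  have "norm (A *v x) \<le> onorm ((*v) A) * norm x"
    by (rule onorm) (simp add: matrix_vector_mul_bounded_linear)
  also have "\<dots> \<le> 4 * norm A * norm x" using o by (simp add: mult_right_mono)
  finally show ?thesis .
qed

lemma d_powr:
  fixes f :: "'a::real_normed_vector \<Rightarrow> real"
  assumes d: "(f has_derivative f') (at y)" and pos: "f y > 0"
  shows "((\<lambda>p. f p powr a) has_derivative (\<lambda>v. (a * f y powr (a - 1)) * f' v)) (at y)"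
proof -
  have "((\<lambda>z. z powr a) has_derivative (*) (a * f y powr (a - 1))) (at (f y))"
    using has_real_derivative_powr[OF pos, of a] by (simp add: has_field_derivative_def)
  from has_derivative_compose[OF d this] show ?thesis .
qed

lemma final_arith:
  fixes h q d \<eta> C l P \<epsilon> :: real
  assumes "\<bar>d - q\<bar> \<le> C * P" "\<bar>h - q / 2\<bar> \<le> \<eta> * P" "q \<ge> l * P" "C \<le> l / 2" "l > 0" "P > 0"
    and "2 * (\<eta> + C / 2) / l < \<epsilon>"
  shows "\<bar>h / d - 1 / 2\<bar> < \<epsilon>"
proof -
  have d: "d \<ge> l / 2 * P"
  proof -
    have "C * P \<le> l / 2 * P" using assms(4,6) by (simp add: mult_right_mono)
    then show ?thesis using assms(1,3) by (simp add: abs_le_iff algebra_simps)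
  qed
  have dpos: "d > 0" using d assms(5,6) by (smt (verit) mult_pos_pos half_gt_zero)
  have num: "\<bar>h - d / 2\<bar> \<le> (\<eta> + C / 2) * P"
    using assms(1,2) by (simp add: abs_le_iff algebra_simps)
  have "\<bar>h / d - 1 / 2\<bar> = \<bar>h - d / 2\<bar> / d" using dpos by (simp add: field_simps abs_div)
  also have "\<dots> \<le> (\<eta> + C / 2) * P / (l / 2 * P)"
  proof (rule frac_le)
    show "0 \<le> (\<eta> + C / 2) * P" using num abs_ge_zero order_trans by blast
    show "0 < l / 2 * P" using assms(5,6) by simp
  qed (use num d in auto)
  also have "\<dots> = 2 * (\<eta> + C / 2) / l" using assms(5,6) by (simp add: field_simps)
  finally show ?thesis using assms(7) by linarith
qed

lemma aux_cancel: "(u::real) \<noteq> 0 \<Longrightarrow> a / (4 * u) * u = a / 4"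
  by simp

lemma aux_lin: "(hz::real) - k*nz \<le> (1-t)*(hx - k*nx) + t*(hy - k*ny) \<Longrightarrow> k*nz \<le> k*((1-t)*nx + t*ny) \<Longrightarrow> hz \<le> (1-t)*hx + t*hy"
  by (simp add: algebra_simps)

lemma aux2: "(L::real)/2*C - hp + (L*B - L*C - D) \<le> L/2*A - hz \<Longrightarrow> hz \<le> hp + D + L/2*(A - 2*B + C)"
  by (simp add: field_simps)

context
  fixes H :: "real^2 \<Rightarrow> real" and DH :: "real^2 \<Rightarrow> real^2" and D2H :: "real^2 \<Rightarrow> real^2^2"
  assumes C2: "C2_with H DH D2H"
    and H1a: "loc_strongly_convex H" and H1b: "loc_strongly_concave H"
    and H20: "H 0 = 0" and H2p: "\<forall>p. H p \<ge> 0"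
begin

lemma dH: "(H has_derivative (\<lambda>v. DH p \<bullet> v)) (at p)"
  using C2 unfolding C2_with_def by blast

lemma dDH: "(DH has_derivative (\<lambda>v. D2H p *v v)) (at p)"
  using C2 unfolding C2_with_def by blast

lemma contD2H: "continuous_on UNIV D2H"
  using C2 unfolding C2_with_def by blast

lemma contH: "isCont H p"
  using dH has_derivative_continuous by blast

lemma contDH: "isCont DH p"
  using dDH has_derivative_continuous by blast

lemma DH0: "DH 0 = 0"
proof -
  let ?v = "DH 0"
  have d1: "((\<lambda>t. t *\<^sub>R ?v) has_derivative (\<lambda>t. t *\<^sub>R ?v)) (at 0)"
    by (auto intro!: derivative_eq_intros)
  have dH0: "(H has_derivative (\<lambda>v. DH 0 \<bullet> v)) (at (0 *\<^sub>R ?v))" using dH by simp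
  have d2: "((\<lambda>t. H (t *\<^sub>R ?v)) has_derivative (\<lambda>t. DH 0 \<bullet> (t *\<^sub>R ?v))) (at 0)"
    using has_derivative_compose[OF d1 dH0] by simp
  have e: "(\<lambda>t. DH 0 \<bullet> (t *\<^sub>R ?v)) = (*) (DH 0 \<bullet> ?v)" by (auto simp: mult.commute)
  have "((\<lambda>t. H (t *\<^sub>R ?v)) has_real_derivative (DH 0 \<bullet> ?v)) (at 0)"
    unfolding has_field_derivative_def using d2 unfolding e .
  then have "DH 0 \<bullet> ?v = 0"
    by (rule DERIV_local_min[where d=1]) (use H20 H2p in auto)
  then show ?thesis by simp
qed

lemma Hconv: "convex_on UNIV H"
proof (rule convex_onI)
  fix t :: real and x y :: "real^2"
  assume t: "t > 0" "t < 1"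
  let ?U = "ball (0::real^2) (norm x + norm y + 1)"
  obtain l where l: "l > 0" "convex_on ?U (\<lambda>p. H p - l / 2 * (norm p)^2)"
    using H1a unfolding loc_strongly_convex_def using bounded_ball convex_ball by blast
  have xU: "x \<in> ?U" and yU: "y \<in> ?U" using norm_ge_zero[of x] norm_ge_zero[of y] by (auto simp del: norm_ge_zero)
  have a: "H ((1 - t) *\<^sub>R x + t *\<^sub>R y) - l / 2 * (norm ((1 - t) *\<^sub>R x + t *\<^sub>R y))^2
      \<le> (1 - t) * (H x - l / 2 * (norm x)^2) + t * (H y - l / 2 * (norm y)^2)"
    using convex_onD[OF l(2), of t x y] t xU yU by simp
  have b: "(norm ((1 - t) *\<^sub>R x + t *\<^sub>R y))^2 \<le> (1 - t) * (norm x)^2 + t * (norm y)^2"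
    unfolding norm_convex_comb_sq using t by simp
  show "H ((1 - t) *\<^sub>R x + t *\<^sub>R y) \<le> (1 - t) * H x + t * H y"
  proof -
    have c: "l / 2 * (norm ((1 - t) *\<^sub>R x + t *\<^sub>R y))^2 \<le> l / 2 * ((1 - t) * (norm x)^2 + t * (norm y)^2)"
      by (rule mult_left_mono[OF b]) (use l in simp)
    show ?thesis using aux_lin[OF a c] .
  qed
qed simp

lemma d_phi: "((\<lambda>p. H p - l / 2 * (norm p)^2) has_derivative (\<lambda>v. (DH y - l *\<^sub>R y) \<bullet> v)) (at y)"
proof -
  have e: "(\<lambda>p. H p - l / 2 * (norm p)^2) = (\<lambda>p. H p - l / 2 * (p \<bullet> p))"
    by (simp add: power2_norm_eq_inner)
  show ?thesis unfolding e
    by (rule derivative_eq_intros dH refl | simp)+ (auto simp: inner_diff_left inner_commute algebra_simps)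
qed

lemma d_psi: "((\<lambda>p. L / 2 * (norm p)^2 - H p) has_derivative (\<lambda>v. (L *\<^sub>R y - DH y) \<bullet> v)) (at y)"
proof -
  have e: "(\<lambda>p. L / 2 * (norm p)^2 - H p) = (\<lambda>p. L / 2 * (p \<bullet> p) - H p)"
    by (simp add: power2_norm_eq_inner)
  show ?thesis unfolding e
    by (rule derivative_eq_intros dH refl | simp)+ (auto simp: inner_diff_left inner_commute algebra_simps)
qed

lemma hess_lower:
  assumes "open U" "x \<in> U" "convex_on U (\<lambda>p. H p - l / 2 * (norm p)^2)"
  shows "(D2H x *v v) \<bullet> v \<ge> l * (norm v)^2"
proof -
  have dD: "((\<lambda>y. DH y - l *\<^sub>R y) has_derivative (\<lambda>v. D2H x *v v - l *\<^sub>R v)) (at x)"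
    by (rule derivative_eq_intros dDH refl | simp)+
  have "0 \<le> (D2H x *v v - l *\<^sub>R v) \<bullet> v"
    by (rule conv_second[OF assms(3,1,2) d_phi dD])
  then show ?thesis by (simp add: inner_diff_left power2_norm_eq_inner)
qed

lemma hess_upper:
  assumes "open U" "x \<in> U" "convex_on U (\<lambda>p. L / 2 * (norm p)^2 - H p)"
  shows "(D2H x *v v) \<bullet> v \<le> L * (norm v)^2"
proof -
  have dD: "((\<lambda>y. L *\<^sub>R y - DH y) has_derivative (\<lambda>v. L *\<^sub>R v - D2H x *v v)) (at x)"
    by (rule derivative_eq_intros dDH refl | simp)+
  have "0 \<le> (L *\<^sub>R v - D2H x *v v) \<bullet> v"
    by (rule conv_second[OF assms(3,1,2) d_psi dD])
  then show ?thesis by (simp add: inner_diff_left power2_norm_eq_inner)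
qed

lemma quad_lower:
  assumes "0 \<in> U" "x \<in> U" "convex_on U (\<lambda>p. H p - l / 2 * (norm p)^2)"
  shows "H x \<ge> l / 2 * (norm x)^2"
  using conv_tangent[OF assms(3,1,2) d_phi] by (simp add: DH0 H20)

lemma Hpos: assumes "x \<noteq> 0" shows "H x > 0"
proof -
  let ?U = "ball (0::real^2) (norm x + 1)"
  obtain l where l: "l > 0" "convex_on ?U (\<lambda>p. H p - l / 2 * (norm p)^2)"
    using H1a unfolding loc_strongly_convex_def using bounded_ball convex_ball by blast
  have "H x \<ge> l / 2 * (norm x)^2"
  proof (rule quad_lower[OF _ _ l(2)])
    have "0 < norm x + 1" by (smt (verit) norm_ge_zero)
    then show "0 \<in> ?U" "x \<in> ?U" by auto
  qed
  moreover have "l / 2 * (norm x)^2 > 0" using l(1) assms by simp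
  ultimately show ?thesis by linarith
qed

lemma Hgrowth: "\<exists>c>0. \<forall>y. norm y \<ge> 1 \<longrightarrow> H y \<ge> c * norm y"
proof -
  let ?U = "ball (0::real^2) 1"
  obtain l where l: "l > 0" "convex_on ?U (\<lambda>p. H p - l / 2 * (norm p)^2)"
    using H1a unfolding loc_strongly_convex_def using bounded_ball convex_ball by blast
  have "\<forall>y. norm y \<ge> 1 \<longrightarrow> H y \<ge> l / 4 * norm y"
  proof (intro allI impI)
    fix y :: "real^2" assume y: "norm y \<ge> 1"
    define t where "t = 1 / (2 * norm y)"
    have ny: "norm y > 0" using y by linarith
    have t: "t > 0" "t \<le> 1" unfolding t_def using ny y by (simp_all add: divide_simps)
    have nz: "norm (t *\<^sub>R y) = 1/2" using ny by (simp add: t_def)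
    have "H (t *\<^sub>R y) \<ge> l / 2 * (norm (t *\<^sub>R y))^2"
      by (rule quad_lower[OF _ _ l(2)]) (use nz in auto)
    then have a: "H (t *\<^sub>R y) \<ge> l / 8" unfolding nz by (simp add: power2_eq_square)
    have "H ((1 - t) *\<^sub>R 0 + t *\<^sub>R y) \<le> (1 - t) * H 0 + t * H y"
      using convex_onD[OF Hconv, of t 0 y] t by simp
    then have "H (t *\<^sub>R y) \<le> t * H y" using H20 by simp
    with a have "l / 8 \<le> t * H y" by linarith
    then have "l / 8 * (2 * norm y) \<le> H y" using ny by (simp add: t_def field_simps)
    then show "H y \<ge> l / 4 * norm y" by simp
  qed
  then show ?thesis using l(1) by (intro exI[of _ "l/4"]) auto
qed

lemma sub_open: "open {p. H p < c}"
  by (rule open_Collect_less) (auto intro: continuous_at_imp_continuous_on contH)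

lemma sub_convex: "convex {p. H p < c}"
  unfolding convex_alt
proof (intro ballI allI impI)
  fix x y and u :: real assume x: "x \<in> {p. H p < c}" and y: "y \<in> {p. H p < c}" and u: "0 \<le> u \<and> u \<le> 1"
  have "H ((1 - u) *\<^sub>R x + u *\<^sub>R y) \<le> (1 - u) * H x + u * H y"
    using convex_onD[OF Hconv, of u x y] u by simp
  also have "\<dots> < c"
    using x y u by simp (smt (verit) convex_bound_lt)
  finally show "(1 - u) *\<^sub>R x + u *\<^sub>R y \<in> {p. H p < c}" by simp
qed

lemma sub_bounded: "bounded {p. H p < c}"
proof -
  obtain k where k: "k > 0" "\<forall>y. norm y \<ge> 1 \<longrightarrow> H y \<ge> k * norm y" using Hgrowth by blast
  have "{p. H p < c} \<subseteq> cball 0 (max 1 (c / k))"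
  proof
    fix p assume p: "p \<in> {p. H p < c}"
    show "p \<in> cball 0 (max 1 (c / k))"
    proof (cases "norm p \<ge> 1")
      case True
      then have "k * norm p < c" using k p by force
      then have "norm p \<le> c / k" using k(1) by (simp add: field_simps)
      then show ?thesis by simp
    qed simp
  qed
  then show ?thesis using bounded_cball bounded_subset by blast
qed

lemma sub_eq: "H -` {0..<c} = {p. H p < c}"
  using H2p by auto

lemma descent:
  assumes L: "L > 0" and cv: "convex_on {p. H p < c} (\<lambda>p. L / 2 * (norm p)^2 - H p)"
    and pc: "H p < c"
  shows "(norm (DH p))^2 \<le> 2 * L * H p"
proof -
  let ?g = "DH p"
  define q where "q t = p - (t / L) *\<^sub>R ?g" for t
  have key: "H z \<le> H p + ?g \<bullet> (z - p) + L / 2 * (norm (z - p))^2" if z: "H z < c" for z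
  proof -
    have i1: "L / 2 * (norm p)^2 - H p + (L *\<^sub>R p - ?g) \<bullet> (z - p) \<le> L / 2 * (norm z)^2 - H z"
      using conv_tangent[OF cv _ _ d_psi, of p z] pc z by simp
    have i2: "(norm (z - p))^2 = (norm z)^2 - 2 * (p \<bullet> z) + (norm p)^2"
      by (simp add: power2_norm_eq_inner inner_diff_left inner_diff_right inner_commute)
    have i3: "(L *\<^sub>R p - ?g) \<bullet> (z - p) = L * (p \<bullet> z) - L * (norm p)^2 - ?g \<bullet> (z - p)"
      by (simp add: power2_norm_eq_inner inner_diff_left inner_diff_right inner_commute right_diff_distrib)
    show ?thesis unfolding i2 using aux2[OF i1[unfolded i3]] .
  qed
  have qb: "H (q t) \<le> H p - (t - t^2 / 2) / L * (norm ?g)^2" if "H (q t) < c" for t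
  proof -
    have "H (q t) \<le> H p + ?g \<bullet> (q t - p) + L / 2 * (norm (q t - p))^2" using key that .
    moreover have "?g \<bullet> (q t - p) = - (t / L) * (norm ?g)^2"
      by (simp add: q_def power2_norm_eq_inner)
    moreover have "(norm (q t - p))^2 = (t / L)^2 * (norm ?g)^2"
      by (simp add: q_def power_mult_distrib power_divide)
    ultimately show ?thesis using L by (simp add: field_simps power2_eq_square)
  qed
  have q1: "H (q 1) < c"
  proof (rule ccontr)
    assume "\<not> H (q 1) < c"
    then have c1: "c \<le> H (q 1)" by simp
    define m where "m = (H p + c) / 2"
    have cont: "continuous_on {0..1} (\<lambda>t. H (q t))"
      by (rule continuous_at_imp_continuous_on) (use L in \<open>auto intro!: isCont_o2[OF _ contH] continuous_intros simp: q_def\<close>)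
    have "H (q 0) \<le> m" "m \<le> H (q 1)" using pc c1 by (simp_all add: q_def m_def)
    then obtain t where t: "0 \<le> t" "t \<le> 1" "H (q t) = m"
      using IVT'[of "\<lambda>t. H (q t)" 0 m 1] cont by auto
    have "m < c" using pc by (simp add: m_def)
    then have "m \<le> H p - (t - t^2 / 2) / L * (norm ?g)^2" using qb[of t] t by simp
    moreover have "(t - t^2 / 2) / L * (norm ?g)^2 \<ge> 0"
    proof -
      have "t * t \<le> t * 2" using mult_left_mono[of t 2 t] t by simp
      then have "t - t^2 / 2 \<ge> 0" by (simp add: power2_eq_square)
      then show ?thesis using L by simp
    qed
    ultimately have "m \<le> H p" by linarith
    then show False using pc by (simp add: m_def)
  qed
  have "0 \<le> H (q 1)" using H2p by simp
  also have "\<dots> \<le> H p - (1 - 1^2 / 2) / L * (norm ?g)^2" using qb[OF q1] .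
  finally show ?thesis using L by (simp add: field_simps)
qed

lemma DH_nz: assumes "p \<noteq> 0" shows "DH p \<bullet> p \<ge> H p" "DH p \<noteq> 0"
proof -
  have "H p + DH p \<bullet> (0 - p) \<le> H 0"
    using conv_tangent[OF Hconv _ _ dH, of p 0] by simp
  then show "DH p \<bullet> p \<ge> H p" using H20 by simp
  then show "DH p \<noteq> 0" using Hpos[OF assms] by auto
qed

lemma tau_bound:
  assumes p: "p \<noteq> 0" and pc: "H p < c" and l: "l > 0" and L: "L > 0"
    and cl: "convex_on {q. H q < c} (\<lambda>p. H p - l / 2 * (norm p)^2)"
    and cL: "convex_on {q. H q < c} (\<lambda>p. L / 2 * (norm p)^2 - H p)"
  shows "tau_tilde H DH D2H p \<ge> l / (2 * L)" and "l \<le> L"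
proof -
  have pU: "p \<in> {q. H q < c}" using pc by simp
  have pd: "\<And>w. (D2H p *v w) \<bullet> w \<ge> l * (norm w)^2"
    by (rule hess_lower[OF sub_open pU cl])
  have ub: "\<And>w. (D2H p *v w) \<bullet> w \<le> L * (norm w)^2"
    by (rule hess_upper[OF sub_open pU cL])
  have "l * (norm p)^2 \<le> L * (norm p)^2" using pd[of p] ub[of p] by linarith
  then show "l \<le> L" using p by simp
  let ?g = "DH p"
  let ?y = "matrix_inv (D2H p) *v ?g"
  have g: "?g \<noteq> 0" using DH_nz[OF p] by simp
  have y: "?y \<noteq> 0"
  proof
    assume "?y = 0"
    then have "D2H p *v ?y = 0" by simp
    then show False using pd_inv(1)[OF pd l, of ?g] g by simp
  qed
  have pos: "?y \<bullet> ?g > 0"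
  proof -
    have "?y \<bullet> ?g \<ge> l * (norm ?y)^2" by (rule pd_inv(4)[OF pd l])
    moreover have "l * (norm ?y)^2 > 0" using y l by simp
    ultimately show ?thesis by linarith
  qed
  have a: "?y \<bullet> ?g \<le> (norm ?g)^2 / l" by (rule pd_inv(5)[OF pd l])
  have b: "(norm ?g)^2 \<le> 2 * L * H p" by (rule descent[OF L cL pc])
  have "?y \<bullet> ?g \<le> 2 * L * H p / l" using a b l by (smt (verit) divide_right_mono)
  then have "?y \<bullet> ?g * l \<le> 2 * L * H p" using l by (simp add: field_simps)
  then have "l / (2 * L) \<le> H p / (?y \<bullet> ?g)" using pos L by (simp add: field_simps)
  then show "tau_tilde H DH D2H p \<ge> l / (2 * L)" using p by (simp add: tau_tilde_def)
qed

lemma hess_pow: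
  assumes g1: "1/2 \<le> \<gamma>" and g2: "\<gamma> < 1"
    and cv: "convex_on (H -` {0..R}) (\<lambda>p. H p powr \<gamma>)"
    and x1: "0 < H x" and x2: "H x < R"
  shows "(D2H x *v v) \<bullet> v * H x \<ge> (1 - \<gamma>) * (DH x \<bullet> v)^2"
proof -
  let ?W = "{y. 0 < H y \<and> H y < R}"
  have oW: "open ?W"
    unfolding Collect_conj_eq
    by (intro open_Int open_Collect_less) (auto intro: continuous_at_imp_continuous_on contH)
  obtain r where r: "r > 0" "ball x r \<subseteq> ?W" using openE[OF oW, of x] x1 x2 by auto
  have cvb: "convex_on (ball x r) (\<lambda>p. H p powr \<gamma>)"
    by (rule convex_on_subset[OF cv]) (use r(2) in auto)
  define k where "k y = \<gamma> * H y powr (\<gamma> - 1)" for y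
  have d\<phi>: "((\<lambda>p. H p powr \<gamma>) has_derivative (\<lambda>v. (k y *\<^sub>R DH y) \<bullet> v)) (at y)"
    if "y \<in> ball x r" for y
  proof -
    have "H y > 0" using that r(2) by auto
    from d_powr[OF dH this, of \<gamma>] show ?thesis by (simp add: k_def)
  qed
  define k' where "k' v = \<gamma> * (((\<gamma> - 1) * H x powr (\<gamma> - 1 - 1)) * (DH x \<bullet> v))" for v
  have dk: "(k has_derivative k') (at x)"
    unfolding k_def k'_def
    by (intro has_derivative_mult_right d_powr dH x1)
  have dD: "((\<lambda>y. k y *\<^sub>R DH y) has_derivative (\<lambda>v. k x *\<^sub>R (D2H x *v v) + k' v *\<^sub>R DH x)) (at x)"
    by (rule has_derivative_scaleR[OF dk dDH])
  have "0 \<le> (k x *\<^sub>R (D2H x *v v) + k' v *\<^sub>R DH x) \<bullet> v"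
    by (rule conv_second[OF cvb open_ball _ d\<phi> dD]) (use r in simp)
  then have A: "0 \<le> k x * ((D2H x *v v) \<bullet> v) + k' v * (DH x \<bullet> v)"
    by (simp add: inner_add_left)
  define P where "P = H x powr (\<gamma> - 1)"
  have P: "P > 0" using x1 by (simp add: P_def)
  have e: "H x powr (\<gamma> - 1 - 1) = P / H x"
    using x1 by (simp add: P_def powr_diff power2_eq_square)
  have kx: "k x = \<gamma> * P" by (simp add: k_def P_def)
  have k'v: "k' v = \<gamma> * (((\<gamma> - 1) * (P / H x)) * (DH x \<bullet> v))" unfolding k'_def e ..
  have gP: "\<gamma> * P > 0" using P g1 by simp
  have A1: "0 \<le> (H x / (\<gamma> * P)) * (k x * ((D2H x *v v) \<bullet> v) + k' v * (DH x \<bullet> v))"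
    using A gP x1 by simp
  have "(H x / (\<gamma> * P)) * (k x * ((D2H x *v v) \<bullet> v) + k' v * (DH x \<bullet> v))
      = H x * ((D2H x *v v) \<bullet> v) + (\<gamma> - 1) * (DH x \<bullet> v)^2"
  proof -
    have n1: "P \<noteq> 0" "\<gamma> \<noteq> 0" "H x \<noteq> 0" using P g1 x1 by auto
    show ?thesis unfolding kx k'v using n1 by (simp add: field_simps power2_eq_square)
  qed
  with A1 have "0 \<le> H x * ((D2H x *v v) \<bullet> v) + (\<gamma> - 1) * (DH x \<bullet> v)^2" by simp
  then show ?thesis using x1 by (simp add: algebra_simps)
qed

lemma pd_open:
  assumes "open U" "bounded U" "convex U"
  shows "\<exists>l>0. \<forall>q\<in>U. \<forall>w. (D2H q *v w) \<bullet> w \<ge> l * (norm w)^2"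
proof -
  obtain l where l: "l > 0" "convex_on U (\<lambda>p. H p - l / 2 * (norm p)^2)"
    using H1a assms unfolding loc_strongly_convex_def by blast
  show ?thesis using hess_lower[OF assms(1) _ l(2)] l(1) by blast
qed

lemma pd_at: "\<exists>l>0. \<forall>w. (D2H p *v w) \<bullet> w \<ge> l * (norm w)^2"
proof -
  have "p \<in> ball p 1" by simp
  then show ?thesis using pd_open[of "ball p 1"] by blast
qed

lemma yg_pos:
  assumes p: "p \<noteq> 0"
  shows "(matrix_inv (D2H p) *v DH p) \<bullet> DH p > 0"
proof -
  obtain l where l: "l > 0" and pd: "\<And>w. (D2H p *v w) \<bullet> w \<ge> l * (norm w)^2" using pd_at by blast
  let ?g = "DH p"
  let ?y = "matrix_inv (D2H p) *v ?g"
  have g: "?g \<noteq> 0" using DH_nz[OF p] by simp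
  have y: "?y \<noteq> 0"
  proof
    assume "?y = 0"
    then have "D2H p *v ?y = 0" by simp
    then show False using pd_inv(1)[OF pd l, of ?g] g by simp
  qed
  have "?y \<bullet> ?g \<ge> l * (norm ?y)^2" by (rule pd_inv(4)[OF pd l])
  moreover have "l * (norm ?y)^2 > 0" using y l by simp
  ultimately show ?thesis by linarith
qed

lemma part_ii:
  assumes g1: "1/2 \<le> \<gamma>" and g2: "\<gamma> < 1" and R: "R > 0"
    and cv: "convex_on (H -` {0..R}) (\<lambda>p. H p powr \<gamma>)"
    and pR: "p \<in> H -` {0..R}"
  shows "tau_tilde H DH D2H p \<ge> 1 - \<gamma>"
proof (cases "p = 0")
  case True then show ?thesis using g1 by (simp add: tau_tilde_def)
next
  case False
  then have p: "p \<noteq> 0" .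
  have HpR: "H p \<le> R" using pR by simp
  have ineq: "(D2H p *v v) \<bullet> v * H p \<ge> (1 - \<gamma>) * (DH p \<bullet> v)^2" for v
  proof -
    define F where "F s = (D2H (s *\<^sub>R p) *v v) \<bullet> v * H (s *\<^sub>R p) - (1 - \<gamma>) * (DH (s *\<^sub>R p) \<bullet> v)^2" for s :: real
    have lin: "((\<lambda>s::real. s *\<^sub>R p) \<longlongrightarrow> p) (at_left 1)"
    proof -
      have "((\<lambda>s::real. s *\<^sub>R p) \<longlongrightarrow> 1 *\<^sub>R p) (at_left 1)" by (intro tendsto_intros)
      then show ?thesis by simp
    qed
    have cD2: "isCont D2H p" using contD2H by (simp add: continuous_on_eq_continuous_at)
    have lim: "(F \<longlongrightarrow> F 1) (at_left 1)"
    proof -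
      have t1: "((\<lambda>s. D2H (s *\<^sub>R p)) \<longlongrightarrow> D2H (1 *\<^sub>R p)) (at_left 1)"
        using isCont_tendsto_compose[OF cD2 lin] by simp
      have t2: "((\<lambda>s. H (s *\<^sub>R p)) \<longlongrightarrow> H (1 *\<^sub>R p)) (at_left 1)"
        using isCont_tendsto_compose[OF contH lin] by simp
      have t3: "((\<lambda>s. DH (s *\<^sub>R p)) \<longlongrightarrow> DH (1 *\<^sub>R p)) (at_left 1)"
        using isCont_tendsto_compose[OF contDH lin] by simp
      show ?thesis unfolding F_def by (intro tendsto_intros tendsto_mv t1 t2 t3)
    qed
    have ev0: "eventually (\<lambda>s::real. s \<in> {0<..<1}) (at_left 1)"
      by (rule eventually_at_left_real) simp
    have ev: "eventually (\<lambda>s. F s \<ge> 0) (at_left 1)"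
      using ev0
    proof (rule eventually_mono)
      fix s :: real assume s: "s \<in> {0<..<1}"
      have sp: "s *\<^sub>R p \<noteq> 0" using s p by simp
      have a: "0 < H (s *\<^sub>R p)" by (rule Hpos[OF sp])
      have "H ((1 - s) *\<^sub>R 0 + s *\<^sub>R p) \<le> (1 - s) * H 0 + s * H p"
        using convex_onD[OF Hconv, of s 0 p] s by simp
      then have "H (s *\<^sub>R p) \<le> s * H p" using H20 by simp
      also have "\<dots> \<le> s * R" using HpR s by (simp add: mult_left_mono)
      also have "\<dots> < R" using s R by simp
      finally have b: "H (s *\<^sub>R p) < R" .
      show "F s \<ge> 0" using hess_pow[OF g1 g2 cv a b, of v] by (simp add: F_def)
    qed
    have "F 1 \<ge> 0" by (rule tendsto_lowerbound[OF lim ev]) simp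
    then show ?thesis by (simp add: F_def)
  qed
  obtain l where l: "l > 0" and pd: "\<And>w. (D2H p *v w) \<bullet> w \<ge> l * (norm w)^2" using pd_at by blast
  let ?g = "DH p"
  let ?y = "matrix_inv (D2H p) *v ?g"
  have pos: "?y \<bullet> ?g > 0" by (rule yg_pos[OF p])
  have "(D2H p *v ?y) \<bullet> ?y * H p \<ge> (1 - \<gamma>) * (?g \<bullet> ?y)^2" by (rule ineq)
  then have "(?y \<bullet> ?g) * H p \<ge> (1 - \<gamma>) * (?y \<bullet> ?g) * (?y \<bullet> ?g)"
    using pd_inv(1)[OF pd l, of ?g] by (simp add: inner_commute power2_eq_square)
  then have "H p \<ge> (1 - \<gamma>) * (?y \<bullet> ?g)" using pos
    by (simp add: mult.commute mult.left_commute)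
  then have "1 - \<gamma> \<le> H p / (?y \<bullet> ?g)" using pos by (simp add: field_simps)
  then show ?thesis using p by (simp add: tau_tilde_def)
qed

lemma cont_nz:
  assumes p0: "p0 \<noteq> 0"
  shows "isCont (tau_tilde H DH D2H) p0"
proof -
  define y where "y p = matrix_inv (D2H p) *v DH p" for p
  obtain l where l: "l > 0" and pd: "\<And>q w. q \<in> ball p0 1 \<Longrightarrow> (D2H q *v w) \<bullet> w \<ge> l * (norm w)^2"
    using pd_open[of "ball p0 1"] by auto
  have cD2: "isCont D2H p0" using contD2H by (simp add: continuous_on_eq_continuous_at)
  have ev1: "eventually (\<lambda>p. p \<in> ball p0 1) (at p0)"
    unfolding eventually_at by (rule exI[of _ 1]) (auto simp: dist_commute)
  have ev2: "eventually (\<lambda>p. p \<noteq> 0) (at p0)"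
    unfolding eventually_at using p0 by (intro exI[of _ "norm p0"]) (auto simp: dist_norm)
  have A0y: "D2H p0 *v y p0 = DH p0"
    unfolding y_def by (rule pd_inv(1)[OF pd l]) simp
  have bnd: "eventually (\<lambda>p. norm (y p - y p0) \<le> norm (DH p - D2H p *v y p0) / l) (at p0)"
    using ev1
  proof (rule eventually_mono)
    fix p assume pb: "p \<in> ball p0 1"
    have pdp: "\<And>w. (D2H p *v w) \<bullet> w \<ge> l * (norm w)^2" using pd[OF pb] .
    have "y p - y p0 = matrix_inv (D2H p) *v DH p - matrix_inv (D2H p) *v (D2H p *v y p0)"
      using pd_inv(2)[OF pdp l, of "y p0"] by (simp add: y_def)
    also have "\<dots> = matrix_inv (D2H p) *v (DH p - D2H p *v y p0)"
      by (simp add: matrix_vector_mult_diff_distrib)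
    finally have e: "y p - y p0 = matrix_inv (D2H p) *v (DH p - D2H p *v y p0)" .
    have "l * norm (y p - y p0) \<le> norm (DH p - D2H p *v y p0)"
      unfolding e by (rule pd_inv(3)[OF pdp l])
    then show "norm (y p - y p0) \<le> norm (DH p - D2H p *v y p0) / l"
      using l by (simp add: field_simps)
  qed
  have "((\<lambda>p. norm (DH p - D2H p *v y p0) / l) \<longlongrightarrow> norm (DH p0 - D2H p0 *v y p0) / l) (at p0)"
    by (intro tendsto_intros tendsto_mv isCont_tendsto_compose[OF cD2] isCont_tendsto_compose[OF contDH] tendsto_ident_at) (use l in simp)
  then have "((\<lambda>p. norm (DH p - D2H p *v y p0) / l) \<longlongrightarrow> 0) (at p0)"
    using A0y by simp
  then have "((\<lambda>p. y p - y p0) \<longlongrightarrow> 0) (at p0)"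
    using Lim_null_comparison[OF bnd] by blast
  then have ty: "(y \<longlongrightarrow> y p0) (at p0)"
    by (simp add: LIM_zero_iff)
  have tg: "(DH \<longlongrightarrow> DH p0) (at p0)" using contDH by (simp add: isCont_def)
  have tH: "(H \<longlongrightarrow> H p0) (at p0)" using contH by (simp add: isCont_def)
  have nz: "y p0 \<bullet> DH p0 \<noteq> 0" using yg_pos[OF p0] by (simp add: y_def)
  have "((\<lambda>p. H p / (y p \<bullet> DH p)) \<longlongrightarrow> H p0 / (y p0 \<bullet> DH p0)) (at p0)"
    by (intro tendsto_intros ty tg tH nz)
  then have "((\<lambda>p. H p / (y p \<bullet> DH p)) \<longlongrightarrow> tau_tilde H DH D2H p0) (at p0)"
    using p0 by (simp add: tau_tilde_def y_def)
  moreover have "eventually (\<lambda>p. H p / (y p \<bullet> DH p) = tau_tilde H DH D2H p) (at p0)"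
    using ev2 by (rule eventually_mono) (simp add: tau_tilde_def y_def)
  ultimately have "(tau_tilde H DH D2H \<longlongrightarrow> tau_tilde H DH D2H p0) (at p0)"
    by (rule Lim_transform_eventually)
  then show ?thesis by (simp add: isCont_def)
qed

lemma dH_line: "((\<lambda>t. H (t *\<^sub>R p)) has_real_derivative (DH (t *\<^sub>R p) \<bullet> p)) (at t)"
proof -
  have d1: "((\<lambda>t. t *\<^sub>R p) has_derivative (\<lambda>s. s *\<^sub>R p)) (at t)"
    by (auto intro!: derivative_eq_intros)
  have d2: "((\<lambda>t. H (t *\<^sub>R p)) has_derivative (\<lambda>s. DH (t *\<^sub>R p) \<bullet> (s *\<^sub>R p))) (at t)"
    using has_derivative_compose[OF d1 dH] by simp
  have e: "(\<lambda>s. DH (t *\<^sub>R p) \<bullet> (s *\<^sub>R p)) = (*) (DH (t *\<^sub>R p) \<bullet> p)" by (auto simp: mult.commute)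
  show ?thesis unfolding has_field_derivative_def using d2 unfolding e .
qed

lemma taylor2:
  assumes hyp: "\<And>z. norm z \<le> norm p \<Longrightarrow> norm (DH z - D2H 0 *v z) \<le> \<eta> * norm z"
    and eta: "\<eta> \<ge> 0"
  shows "\<bar>H p - ((D2H 0 *v p) \<bullet> p) / 2\<bar> \<le> \<eta> * (norm p)^2"
proof -
  let ?q = "(D2H 0 *v p) \<bullet> p"
  define k where "k t = H (t *\<^sub>R p) - t^2 / 2 * ?q" for t :: real
  have dk: "DERIV k t :> (DH (t *\<^sub>R p) \<bullet> p - t * ?q)" for t
    unfolding k_def by (rule derivative_eq_intros dH_line refl | simp)+
  obtain \<xi> :: real where xi: "0 < \<xi>" "\<xi> < 1" and eq: "k 1 - k 0 = (1 - 0) * (DH (\<xi> *\<^sub>R p) \<bullet> p - \<xi> * ?q)"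
    using MVT2[of 0 1 k "\<lambda>t. DH (t *\<^sub>R p) \<bullet> p - t * ?q", OF _ dk] by auto
  have k0: "k 0 = 0" using H20 by (simp add: k_def)
  have k1: "k 1 = H p - ?q / 2" by (simp add: k_def)
  have "DH (\<xi> *\<^sub>R p) \<bullet> p - \<xi> * ?q = (DH (\<xi> *\<^sub>R p) - D2H 0 *v (\<xi> *\<^sub>R p)) \<bullet> p"
    by (simp add: inner_diff_left matrix_vector_mult_scaleR)
  then have "\<bar>H p - ?q / 2\<bar> = \<bar>(DH (\<xi> *\<^sub>R p) - D2H 0 *v (\<xi> *\<^sub>R p)) \<bullet> p\<bar>"
    using eq k0 k1 by simp
  also have "\<dots> \<le> norm (DH (\<xi> *\<^sub>R p) - D2H 0 *v (\<xi> *\<^sub>R p)) * norm p"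
    by (rule Cauchy_Schwarz_ineq2)
  also have "\<dots> \<le> (\<eta> * norm (\<xi> *\<^sub>R p)) * norm p"
  proof -
    have nxi: "norm (\<xi> *\<^sub>R p) \<le> norm p" using xi by (simp add: mult_left_le_one_le)
    show ?thesis using hyp[OF nxi] by (intro mult_right_mono) auto
  qed
  also have "\<dots> \<le> \<eta> * (norm p)^2"
  proof -
    have "\<eta> * norm (\<xi> *\<^sub>R p) * norm p = \<xi> * (\<eta> * (norm p)^2)"
      using xi by (simp add: power2_eq_square)
    also have "\<dots> \<le> \<eta> * (norm p)^2" using xi \<open>\<eta> \<ge> 0\<close> by (simp add: mult_left_le_one_le)
    finally show ?thesis .
  qed
  finally show ?thesis .
qed

lemma cont0: "isCont (tau_tilde H DH D2H) 0"
proof -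
  define A0 where "A0 = D2H 0"
  define K where "K = 4 * norm A0"
  have K0: "K \<ge> 0" by (simp add: K_def)
  obtain l where l: "l > 0" and pd: "\<And>q w. q \<in> ball 0 1 \<Longrightarrow> (D2H q *v w) \<bullet> w \<ge> l * (norm w)^2"
    using pd_open[of "ball 0 1"] by auto
  define c1 where "c1 = 5 * (K + 1) / l + 1"
  have c1: "c1 \<ge> 1" using K0 l by (simp add: c1_def)
  have main: "eventually (\<lambda>p. dist (tau_tilde H DH D2H p) (1/2) < \<epsilon>) (at 0)" if eps: "\<epsilon> > 0" for \<epsilon>
  proof -
    define \<eta> where "\<eta> = min 1 (min (l / (2 * c1)) (\<epsilon> * l / (4 * (1 + c1))))"
    have eta: "\<eta> > 0" "\<eta> \<le> 1" "\<eta> \<le> l / (2 * c1)" "\<eta> \<le> \<epsilon> * l / (4 * (1 + c1))"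
      using l c1 eps by (auto simp: \<eta>_def)
    obtain d1 where d1: "d1 > 0" and E1: "\<And>z. norm z < d1 \<Longrightarrow> norm (DH z - A0 *v z) \<le> \<eta> * norm z"
      using dDH[of 0] eta(1) unfolding has_derivative_at_alt A0_def by (force simp: DH0)
    have cD2: "isCont D2H 0" using contD2H by (simp add: continuous_on_eq_continuous_at)
    obtain d3 where d3: "d3 > 0" and E3: "\<And>x. x \<noteq> 0 \<Longrightarrow> norm x < d3 \<Longrightarrow> norm (D2H x - A0) < \<eta>"
      using cD2 eta(1) unfolding isCont_def LIM_eq A0_def by force
    define \<delta> where "\<delta> = min 1 (min d1 d3)"
    have \<delta>: "\<delta> > 0" using d1 d3 by (simp add: \<delta>_def)
    have evp: "eventually (\<lambda>p. p \<noteq> 0 \<and> norm p < \<delta>) (at 0)"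
      unfolding eventually_at using \<delta> by (intro exI[of _ \<delta>]) (auto simp: dist_norm)
    show ?thesis using evp
    proof (rule eventually_mono)
      fix p :: "real^2" assume pp: "p \<noteq> 0 \<and> norm p < \<delta>"
      then have p0: "p \<noteq> 0" and pd1: "norm p < d1" and pd3: "norm p < d3" and pb: "p \<in> ball 0 1"
        by (auto simp: \<delta>_def)
      define g where "g = DH p"
      define A where "A = D2H p"
      define y where "y = matrix_inv A *v g"
      define q where "q = (A0 *v p) \<bullet> p"
      define P where "P = (norm p)^2"
      have P: "P > 0" using p0 by (simp add: P_def)
      have a: "norm (g - A0 *v p) \<le> \<eta> * norm p" using E1[OF pd1] by (simp add: g_def)
      have gtay: "\<bar>H p - q / 2\<bar> \<le> \<eta> * P"
        unfolding q_def P_def A0_def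
        by (rule taylor2) (use E1 pd1 eta(1) in \<open>auto simp: A0_def\<close>)
      have b: "norm (A *v p - A0 *v p) \<le> 4 * \<eta> * norm p"
      proof -
        have "norm (A *v p - A0 *v p) = norm ((A - A0) *v p)" by (simp add: matrix_vector_mult_diff_rdistrib)
        also have "\<dots> \<le> 4 * norm (A - A0) * norm p" by (rule norm_mv)
        also have "\<dots> \<le> 4 * \<eta> * norm p"
          using E3[OF p0 pd3] by (simp add: A_def mult_right_mono less_imp_le)
        finally show ?thesis .
      qed
      have c: "norm (g - A *v p) \<le> 5 * \<eta> * norm p"
      proof -
        have "norm (g - A *v p) = norm ((g - A0 *v p) - (A *v p - A0 *v p))" by (simp add: algebra_simps)
        also have "\<dots> \<le> norm (g - A0 *v p) + norm (A *v p - A0 *v p)" by (rule norm_triangle_ineq4)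
        also have "\<dots> \<le> 5 * \<eta> * norm p" using a b by simp
        finally show ?thesis .
      qed
      have pdA: "\<And>w. (A *v w) \<bullet> w \<ge> l * (norm w)^2" unfolding A_def using pd[OF pb] .
      have d: "l * norm (y - p) \<le> 5 * \<eta> * norm p"
      proof -
        have "y - p = matrix_inv A *v g - matrix_inv A *v (A *v p)"
          using pd_inv(2)[OF pdA l, of p] by (simp add: y_def)
        also have "\<dots> = matrix_inv A *v (g - A *v p)" by (simp add: matrix_vector_mult_diff_distrib)
        finally have "l * norm (y - p) \<le> norm (g - A *v p)"
          using pd_inv(3)[OF pdA l, of "g - A *v p"] by simp
        then show ?thesis using c by simp
      qed
      have d': "norm (y - p) \<le> 5 * \<eta> * norm p / l" using d l by (simp add: field_simps)
      have e: "norm g \<le> (K + 1) * norm p"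
      proof -
        have "norm g \<le> norm (A0 *v p) + norm (g - A0 *v p)" by (rule norm_triangle_sub)
        also have "\<dots> \<le> K * norm p + 1 * norm p"
          using norm_mv[of A0 p] a eta(2) mult_right_mono[OF eta(2), of "norm p"] by (simp add: K_def)
        finally show ?thesis by (simp add: algebra_simps)
      qed
      have f: "\<bar>y \<bullet> g - q\<bar> \<le> (\<eta> * c1) * P"
      proof -
        have "y \<bullet> g - q = (y - p) \<bullet> g + p \<bullet> (g - A0 *v p)"
          by (simp add: q_def inner_diff_left inner_diff_right inner_commute)
        then have "\<bar>y \<bullet> g - q\<bar> \<le> \<bar>(y - p) \<bullet> g\<bar> + \<bar>p \<bullet> (g - A0 *v p)\<bar>" by simp
        also have "\<dots> \<le> norm (y - p) * norm g + norm p * norm (g - A0 *v p)"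
          by (intro add_mono Cauchy_Schwarz_ineq2)
        also have "\<dots> \<le> (5 * \<eta> * norm p / l) * ((K + 1) * norm p) + norm p * (\<eta> * norm p)"
          by (intro add_mono mult_mono d' e mult_left_mono a) (use K0 eta l in auto)
        also have "\<dots> = (\<eta> * c1) * P"
          using l by (simp add: c1_def P_def power2_eq_square field_simps)
        finally show ?thesis .
      qed
      have qP: "q \<ge> l * P"
        using pd[of 0 p] by (simp add: q_def P_def A0_def)
      have C: "\<eta> * c1 \<le> l / 2"
        using eta(3) c1 by (simp add: field_simps)
      have fin: "2 * (\<eta> + \<eta> * c1 / 2) / l < \<epsilon>"
      proof -
        have "2 * (\<eta> + \<eta> * c1 / 2) / l \<le> 2 * (\<eta> * (1 + c1)) / l"
          using eta(1) c1 l by (intro divide_right_mono) (auto simp: algebra_simps)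
        also have "\<dots> \<le> 2 * ((\<epsilon> * l / (4 * (1 + c1))) * (1 + c1)) / l"
          using eta(4) c1 l by (intro divide_right_mono mult_left_mono mult_right_mono) auto
        also have "\<dots> = \<epsilon> / 2"
        proof -
          have n: "1 + c1 \<noteq> 0" "l \<noteq> 0" using c1 l by auto
          have "(\<epsilon> * l / (4 * (1 + c1))) * (1 + c1) = \<epsilon> * l / 4" using aux_cancel[OF n(1)] .
          moreover have "2 * (\<epsilon> * l / 4) / l = \<epsilon> / 2" using n(2) by simp
          ultimately show ?thesis by (simp only:)
        qed
        also have "\<dots> < \<epsilon>" using eps by simp
        finally show ?thesis .
      qed
      have "\<bar>H p / (y \<bullet> g) - 1 / 2\<bar> < \<epsilon>"
        by (rule final_arith[OF f gtay qP C l P fin])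
      then show "dist (tau_tilde H DH D2H p) (1/2) < \<epsilon>"
        using p0 by (simp add: tau_tilde_def dist_real_def y_def g_def A_def)
    qed
  qed
  have "(tau_tilde H DH D2H \<longlongrightarrow> 1/2) (at 0)"
    using main by (simp add: tendsto_iff)
  then show ?thesis by (simp add: isCont_def tau_tilde_def)
qed

lemma part_i:
  assumes p: "p \<noteq> 0"
  shows "tau_tilde H DH D2H p \<ge> 1/2 * (lambdaH H (H p) / LambdaH H (H p))^2"
proof -
  define R where "R = H p"
  define S where "S e = {l. l > 0 \<and> convex_on (H -` {0..<R + e}) (\<lambda>p. H p - l / 2 * (norm p)^2)}" for e
  define T where "T e = {L. L > 0 \<and> convex_on (H -` {0..<R + e}) (\<lambda>p. L / 2 * (norm p)^2 - H p)}" for e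
  have lam: "lambdaH H (H p) = (SUP e\<in>{0<..}. Sup (S e))"
    unfolding lambdaH_def S_def R_def ..
  have Lam: "LambdaH H (H p) = (INF e\<in>{0<..}. Inf (T e))"
    unfolding LambdaH_def T_def R_def ..
  have Sne: "S e \<noteq> {}" for e
    using H1a sub_bounded sub_convex unfolding loc_strongly_convex_def S_def sub_eq by blast
  have Tne: "T e \<noteq> {}" for e
    using H1b sub_bounded sub_convex unfolding loc_strongly_concave_def T_def sub_eq by blast
  have Spos: "\<And>e l. l \<in> S e \<Longrightarrow> l > 0" by (simp add: S_def)
  have Tpos: "\<And>e L. L \<in> T e \<Longrightarrow> L > 0" by (simp add: T_def)
  have both: "tau_tilde H DH D2H p \<ge> l / (2 * L) \<and> l \<le> L"
    if e: "e > 0" "e' > 0" and l: "l \<in> S e" and L: "L \<in> T e'" for e e' l L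
  proof -
    define c where "c = R + min e e'"
    have pc: "H p < c" using e by (simp add: c_def R_def)
    have sub1: "{q. H q < c} \<subseteq> H -` {0..<R + e}" using H2p by (auto simp: c_def)
    have sub2: "{q. H q < c} \<subseteq> H -` {0..<R + e'}" using H2p by (auto simp: c_def)
    have cl: "convex_on {q. H q < c} (\<lambda>p. H p - l / 2 * (norm p)^2)"
      using l sub1 sub_convex by (auto simp: S_def intro: convex_on_subset)
    have cL: "convex_on {q. H q < c} (\<lambda>p. L / 2 * (norm p)^2 - H p)"
      using L sub2 sub_convex by (auto simp: T_def intro: convex_on_subset)
    show ?thesis using tau_bound[OF p pc Spos[OF l] Tpos[OF L] cl cL] by simp
  qed
  obtain l0 where l0: "l0 \<in> S 1" using Sne by blast
  obtain L0 where L0: "L0 \<in> T 1" using Tne by blast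
  have tpos: "tau_tilde H DH D2H p > 0"
  proof -
    have "l0 / (2 * L0) > 0" using Spos[OF l0] Tpos[OF L0] by simp
    then show ?thesis using both[of 1 1 l0 L0] l0 L0 by linarith
  qed
  let ?t = "tau_tilde H DH D2H p"
  have bnd1: "l \<le> 1 * L" if "e > 0" "e' > 0" "l \<in> S e" "L \<in> T e'" for e e' l L
    using both[OF that] by simp
  have bnd2: "l \<le> (2 * ?t) * L" if "e > 0" "e' > 0" "l \<in> S e" "L \<in> T e'" for e e' l L
  proof -
    have "l / (2 * L) \<le> ?t" using both[OF that] by simp
    then show ?thesis using Tpos[OF that(4)] by (simp add: field_simps)
  qed
  have i1: "lambdaH H (H p) \<le> 1 * LambdaH H (H p)"
    unfolding lam Lam by (rule sup_inf_bound[OF _ _ _ Tpos bnd1]) (use Sne Tne in auto)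
  have i2: "lambdaH H (H p) \<le> (2 * ?t) * LambdaH H (H p)"
    unfolding lam Lam by (rule sup_inf_bound[OF _ _ _ Tpos bnd2]) (use Sne Tne tpos in auto)
  have i3: "lambdaH H (H p) \<ge> 0"
    unfolding lam by (rule sup_nonneg[OF _ _ _ Spos bnd1]) (use Sne Tne in auto)
  have i4: "LambdaH H (H p) \<ge> 0"
    unfolding Lam by (rule inf_nonneg[OF _ Tpos]) (use Tne in auto)
  show ?thesis
  proof (cases "LambdaH H (H p) = 0")
    case True then show ?thesis using tpos by simp
  next
    case False
    then have Lp: "LambdaH H (H p) > 0" using i4 by simp
    define r where "r = lambdaH H (H p) / LambdaH H (H p)"
    have r0: "r \<ge> 0" using i3 Lp by (simp add: r_def)
    have r1: "r \<le> 1" using i1 Lp by (simp add: r_def field_simps)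
    have r2: "r \<le> 2 * ?t" using i2 Lp by (simp add: r_def field_simps)
    have "r^2 \<le> r" using r0 r1 by (simp add: power2_eq_square mult_left_le)
    then show ?thesis using r2 by (simp add: r_def[symmetric])
  qed
qed


lemma all_parts:
  "continuous_on UNIV (tau_tilde H DH D2H)
     \<and> tau_tilde H DH D2H 0 = 1/2
     \<and> (\<forall>p. p \<noteq> 0 \<longrightarrow>
           tau_tilde H DH D2H p \<ge> 1/2 * (lambdaH H (H p) / LambdaH H (H p))^2)
     \<and> (\<forall>\<gamma> R. 1/2 \<le> \<gamma> \<and> \<gamma> < 1 \<and> R > 0 \<and>
           convex_on (H -` {0..R}) (\<lambda>p. H p powr \<gamma>) \<longrightarrow>
           (\<forall>p \<in> H -` {0..R}. tau_tilde H DH D2H p \<ge> 1 - \<gamma>))"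
proof (intro conjI allI impI ballI)
  show "continuous_on UNIV (tau_tilde H DH D2H)"
  proof (rule continuous_at_imp_continuous_on, rule ballI)
    fix p :: "real^2"
    show "isCont (tau_tilde H DH D2H) p"
      using cont0 cont_nz by (cases "p = 0") auto
  qed
  show "tau_tilde H DH D2H 0 = 1/2" by (simp add: tau_tilde_def)
  fix p :: "real^2"
  assume "p \<noteq> 0"
  then show "tau_tilde H DH D2H p \<ge> 1/2 * (lambdaH H (H p) / LambdaH H (H p))^2"
    by (rule part_i)
next
  fix \<gamma> R :: real and p
  assume a: "1/2 \<le> \<gamma> \<and> \<gamma> < 1 \<and> R > 0 \<and> convex_on (H -` {0..R}) (\<lambda>p. H p powr \<gamma>)"
    and p: "p \<in> H -` {0..R}"
  show "tau_tilde H DH D2H p \<ge> 1 - \<gamma>"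
    using part_ii[of \<gamma> R p] a p by blast
qed

end



theorem lemmaA2:
  fixes H :: "real^2 \<Rightarrow> real" and DH :: "real^2 \<Rightarrow> real^2" and D2H :: "real^2 \<Rightarrow> real^2^2"
  assumes C2: "C2_with H DH D2H"
    and H1: "loc_strongly_convex H" "loc_strongly_concave H"
    and H2: "H 0 = 0" "\<forall>p. H p \<ge> 0"
  shows "continuous_on UNIV (tau_tilde H DH D2H)
     \<and> tau_tilde H DH D2H 0 = 1/2
     \<and> (\<forall>p. p \<noteq> 0 \<longrightarrow>
           tau_tilde H DH D2H p \<ge> 1/2 * (lambdaH H (H p) / LambdaH H (H p))^2)
     \<and> (\<forall>\<gamma> R. 1/2 \<le> \<gamma> \<and> \<gamma> < 1 \<and> R > 0 \<and>
           convex_on (H -` {0..R}) (\<lambda>p. H p powr \<gamma>) \<longrightarrow>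
           (\<forall>p \<in> H -` {0..R}. tau_tilde H DH D2H p \<ge> 1 - \<gamma>))"
  by (rule all_parts[OF C2 H1 H2])

end
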